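(* Let $R$ be a commutative ring and $B,B'$ two quadratically presented $R$-modules fitting into exact sequences of $R$-modules $0\to A\to B\to C\to0$ and $0\to A'\to B'\to C\to0$. Then $\mathrm{Fitt}_R(A)\mathrm{Fitt}_R(B')=\mathrm{Fitt}_R(A')\mathrm{Fitt}_R(B)$.
   Context: An $R$-module $N$ is quadratically presented if there exist $m\ge1$ and an exact sequence $R^m\to R^m\to N\to0$. $\mathrm{Fitt}_R$ denotes the $0$th Fitting ideal. *)

theory Defs
  imports Main "HOL.Modules" "HOL-Combinatorics.Permutations"
begin

text \<open>Modules over a commutative ring 'r are modelled with Main's locale module:
  a type 'm :: ab_group_add with a scalar multiplication s :: 'r => 'm => 'm
  such that module s holds (the module is the whole type).\<close>

definition sqdet :: "nat \<Rightarrow> (nat \<Rightarrow> nat \<Rightarrow> 'r::comm_ring_1) \<Rightarrow> 'r" where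
  "sqdet n Q = (\<Sum>p | p permutes {..<n}. of_int (sign p) * (\<Prod>i<n. Q i (p i)))"

definition ideal_gen :: "'r::comm_ring_1 set \<Rightarrow> 'r set" where
  "ideal_gen S = {(\<Sum>a\<in>t. r a * a) | t r. finite t \<and> t \<subseteq> S}"

definition ideal_prod :: "'r::comm_ring_1 set \<Rightarrow> 'r set \<Rightarrow> 'r set" where
  "ideal_prod I J = ideal_gen {a * b | a b. a \<in> I \<and> b \<in> J}"

text \<open>0-th Fitting ideal: the ideal generated by all determinants det(Q) where, for some
  n and some family g_0..g_(n-1) generating M, every row of the n x n matrix Q is a
  relation among the g_i. (This is the ideal generated by the n x n minors of a relation
  matrix for n generators; it is the zero ideal if M is not finitely generated.)\<close>
definition Fitt :: "('r::comm_ring_1 \<Rightarrow> 'm::ab_group_add \<Rightarrow> 'm) \<Rightarrow> 'r set" where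
  "Fitt s = ideal_gen
     {sqdet n Q | n Q. \<exists>g :: nat \<Rightarrow> 'm.
         (\<forall>x. \<exists>c :: nat \<Rightarrow> 'r. x = (\<Sum>i<n. s (c i) (g i)))
       \<and> (\<forall>k<n. (\<Sum>i<n. s (Q k i) (g i)) = 0)}"

text \<open>Quadratically presented: there are m >= 1 and an exact sequence R^m -> R^m -> N -> 0.
  A linear map R^m -> N is c |-> sum c_i g_i, a linear map R^m -> R^m is d |-> P d.\<close>
definition quad_pres :: "('r::comm_ring_1 \<Rightarrow> 'm::ab_group_add \<Rightarrow> 'm) \<Rightarrow> bool" where
  "quad_pres s \<longleftrightarrow> (\<exists>m \<ge> 1. \<exists>(P :: nat \<Rightarrow> nat \<Rightarrow> 'r) (g :: nat \<Rightarrow> 'm).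
       (\<forall>x. \<exists>c :: nat \<Rightarrow> 'r. x = (\<Sum>i<m. s (c i) (g i)))
     \<and> (\<forall>c :: nat \<Rightarrow> 'r. (\<Sum>i<m. s (c i) (g i)) = 0 \<longleftrightarrow>
           (\<exists>d :: nat \<Rightarrow> 'r. \<forall>i<m. c i = (\<Sum>j<m. P i j * d j))))"

definition short_exact ::
  "('r::comm_ring_1 \<Rightarrow> 'a::ab_group_add \<Rightarrow> 'a) \<Rightarrow> ('r \<Rightarrow> 'b::ab_group_add \<Rightarrow> 'b) \<Rightarrow>
   ('r \<Rightarrow> 'c::ab_group_add \<Rightarrow> 'c) \<Rightarrow> ('a \<Rightarrow> 'b) \<Rightarrow> ('b \<Rightarrow> 'c) \<Rightarrow> bool" where
  "short_exact sA sB sC f g \<longleftrightarrow> module_hom sA sB f \<and> module_hom sB sC g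
     \<and> inj f \<and> surj g \<and> range f = {b. g b = 0}"

end

theory Submission
  imports Defs "Jordan_Normal_Form.Determinant" "HOL-Library.Product_Plus"
begin

hide_const (open) Module.module




definition is_ideal :: "'r::comm_ring_1 set \<Rightarrow> bool" where
  "is_ideal I \<longleftrightarrow> 0 \<in> I \<and> (\<forall>x\<in>I. \<forall>y\<in>I. x + y \<in> I) \<and> (\<forall>r. \<forall>x\<in>I. r * x \<in> I)"

lemma is_ideal_sum:
  assumes "is_ideal I" "\<And>i. i \<in> A \<Longrightarrow> f i \<in> I"
  shows "sum f A \<in> I"
  using assms(2)
proof (induction A rule: infinite_finite_induct)
  case (infinite A) then show ?case using assms(1) by (simp add: is_ideal_def)
next
  case empty then show ?case using assms(1) by (simp add: is_ideal_def)
next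
  case (insert x F) then show ?case using assms(1) by (simp add: is_ideal_def)
qed

lemma is_ideal_mult: "is_ideal I \<Longrightarrow> x \<in> I \<Longrightarrow> r * x \<in> I"
  by (simp add: is_ideal_def)

lemma is_ideal_mult2: "is_ideal I \<Longrightarrow> x \<in> I \<Longrightarrow> x * r \<in> I"
  by (simp add: is_ideal_def mult.commute)

lemma is_ideal_add: "is_ideal I \<Longrightarrow> x \<in> I \<Longrightarrow> y \<in> I \<Longrightarrow> x + y \<in> I"
  by (simp add: is_ideal_def)

lemma is_ideal_neg: "is_ideal I \<Longrightarrow> x \<in> I \<Longrightarrow> - x \<in> I"
  using is_ideal_mult[of I x "-1"] by simp

lemma ideal_gen_is_ideal: "is_ideal (ideal_gen S)"
  unfolding is_ideal_def
proof (intro conjI ballI allI)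
  show "0 \<in> ideal_gen S" unfolding ideal_gen_def
    by (rule CollectI, rule exI[of _ "{}"], auto)
next
  fix x y assume "x \<in> ideal_gen S" "y \<in> ideal_gen S"
  then obtain t r t' r' where t: "finite t" "t \<subseteq> S" "x = (\<Sum>a\<in>t. r a * a)"
    and t': "finite t'" "t' \<subseteq> S" "y = (\<Sum>a\<in>t'. r' a * a)"
    unfolding ideal_gen_def by blast
  define r'' where "r'' a = (if a \<in> t then r a else 0) + (if a \<in> t' then r' a else 0)" for a
  have "(\<Sum>a\<in>t \<union> t'. r'' a * a) = (\<Sum>a\<in>t \<union> t'. (if a \<in> t then r a * a else 0)
      + (if a \<in> t' then r' a * a else 0))"
    by (rule sum.cong) (auto simp: r''_def distrib_right)
  also have "\<dots> = (\<Sum>a\<in>t \<union> t'. (if a \<in> t then r a * a else 0))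
      + (\<Sum>a\<in>t \<union> t'. (if a \<in> t' then r' a * a else 0))"
    by (rule sum.distrib)
  also have "\<dots> = x + y"
    using t t' by (simp add: sum.inter_restrict[symmetric] Int_absorb1 Int_absorb2 Int_commute)
  finally have "x + y = (\<Sum>a\<in>t \<union> t'. r'' a * a)" by simp
  then show "x + y \<in> ideal_gen S" unfolding ideal_gen_def using t t' by blast
next
  fix c x assume "x \<in> ideal_gen S"
  then obtain t r where t: "finite t" "t \<subseteq> S" "x = (\<Sum>a\<in>t. r a * a)"
    unfolding ideal_gen_def by blast
  have cx: "c * x = (\<Sum>a\<in>t. (c * r a) * a)" using t by (simp add: sum_distrib_left mult.assoc)
  show "c * x \<in> ideal_gen S" unfolding ideal_gen_def
    by (rule CollectI, rule exI[of _ t], rule exI[of _ "\<lambda>a. c * r a"]) (use t cx in auto)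
qed

lemma ideal_gen_base: "a \<in> S \<Longrightarrow> a \<in> ideal_gen S"
  unfolding ideal_gen_def
  by (rule CollectI, rule exI[of _ "{a}"], rule exI[of _ "\<lambda>_. 1"], auto)

lemma ideal_gen_min: "is_ideal I \<Longrightarrow> S \<subseteq> I \<Longrightarrow> ideal_gen S \<subseteq> I"
proof
  fix x assume I: "is_ideal I" "S \<subseteq> I" and "x \<in> ideal_gen S"
  then obtain t r where t: "finite t" "t \<subseteq> S" "x = (\<Sum>a\<in>t. r a * a)"
    unfolding ideal_gen_def by blast
  show "x \<in> I" unfolding t(3)
    by (rule is_ideal_sum[OF I(1)], rule is_ideal_mult[OF I(1)], use t I in auto)
qed

lemma ideal_gen_subset: "S \<subseteq> ideal_gen T \<Longrightarrow> ideal_gen S \<subseteq> ideal_gen T"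
  by (rule ideal_gen_min[OF ideal_gen_is_ideal])

lemma ideal_gen_empty: "ideal_gen ({} :: 'r::comm_ring_1 set) = {0}"
proof -
  have "ideal_gen ({} :: 'r set) \<subseteq> {0}"
    by (rule ideal_gen_min, auto simp: is_ideal_def)
  moreover have "0 \<in> ideal_gen ({} :: 'r set)" using ideal_gen_is_ideal is_ideal_def by blast
  ultimately show ?thesis by auto
qed

lemma ideal_gen_zero: "ideal_gen ({0} :: 'r::comm_ring_1 set) = {0}"
proof -
  have "ideal_gen ({0} :: 'r set) \<subseteq> {0}"
    by (rule ideal_gen_min, auto simp: is_ideal_def)
  moreover have "0 \<in> ideal_gen ({0} :: 'r set)" using ideal_gen_is_ideal is_ideal_def by blast
  ultimately show ?thesis by auto
qed

lemma ideal_prod_gen: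
  "ideal_prod (ideal_gen X) (ideal_gen Y) = ideal_gen {x * y | x y. x \<in> X \<and> y \<in> Y}"
  (is "_ = ?J")
proof
  show "?J \<subseteq> ideal_prod (ideal_gen X) (ideal_gen Y)"
    unfolding ideal_prod_def
  proof (rule ideal_gen_subset, rule subsetI)
    fix z assume "z \<in> {x * y | x y. x \<in> X \<and> y \<in> Y}"
    then obtain x y where z: "z = x * y" and xy: "x \<in> X" "y \<in> Y" by blast
    have "x \<in> ideal_gen X" "y \<in> ideal_gen Y" using xy by (auto intro: ideal_gen_base)
    then have "z \<in> {a * b | a b. a \<in> ideal_gen X \<and> b \<in> ideal_gen Y}" using z by blast
    then show "z \<in> ideal_gen {a * b | a b. a \<in> ideal_gen X \<and> b \<in> ideal_gen Y}"
      by (rule ideal_gen_base)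
  qed
next
  have J: "is_ideal ?J" by (rule ideal_gen_is_ideal)
  have step1: "a * y \<in> ?J" if a: "a \<in> ideal_gen X" and y: "y \<in> Y" for a y
  proof -
    have "is_ideal {a. a * y \<in> ?J}"
      using J unfolding is_ideal_def by (auto simp: distrib_right mult.assoc)
    moreover have "X \<subseteq> {a. a * y \<in> ?J}"
    proof
      fix x assume "x \<in> X"
      then have "x * y \<in> {x * y | x y. x \<in> X \<and> y \<in> Y}" using y by blast
      then show "x \<in> {a. a * y \<in> ?J}" by (simp add: ideal_gen_base)
    qed
    ultimately show ?thesis using ideal_gen_min a by blast
  qed
  have step2: "a * b \<in> ?J" if a: "a \<in> ideal_gen X" and b: "b \<in> ideal_gen Y" for a b
  proof -
    have "is_ideal {b. a * b \<in> ?J}"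
      using J unfolding is_ideal_def by (auto simp: distrib_left mult.left_commute)
    moreover have "Y \<subseteq> {b. a * b \<in> ?J}" using step1[OF a] by blast
    ultimately show ?thesis using ideal_gen_min b by blast
  qed
  show "ideal_prod (ideal_gen X) (ideal_gen Y) \<subseteq> ?J"
    unfolding ideal_prod_def
  proof (rule ideal_gen_min[OF J], rule subsetI)
    fix z assume "z \<in> {a * b | a b. a \<in> ideal_gen X \<and> b \<in> ideal_gen Y}"
    then obtain a b where "z = a * b" "a \<in> ideal_gen X" "b \<in> ideal_gen Y" by blast
    then show "z \<in> ?J" using step2 by simp
  qed
qed




lemma sum_split_add: "(\<Sum>i<(m::nat)+n. f i) = (\<Sum>i<m. f i) + (\<Sum>i<n. f (m+i))"
  by (induction n) (auto simp: add.assoc)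

lemma mult_mat_entry:
  "A \<in> carrier_mat n K \<Longrightarrow> B \<in> carrier_mat K m \<Longrightarrow> i < n \<Longrightarrow> j < m \<Longrightarrow>
   (A * B) $$ (i,j) = (\<Sum>l<K. A $$ (i,l) * B $$ (l,j))"
  by (auto simp: index_mult_mat scalar_prod_def atLeast0LessThan intro!: sum.cong)

lemma mat_delete_mat0:
  "i < Suc n \<Longrightarrow> mat_delete (mat (Suc n) (Suc n) F) i 0 =
     mat n n (\<lambda>(a,b). F (if a < i then a else Suc a, Suc b))"
  unfolding mat_delete_def by (rule eq_matI) auto

lemma det_mat_col0:
  "det (mat (Suc n) (Suc n) F) =
   (\<Sum>i<Suc n. F (i,0) * ((-1)^i * det (mat n n (\<lambda>(a,b). F (if a < i then a else Suc a, Suc b)))))"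
proof -
  have "det (mat (Suc n) (Suc n) F) =
      (\<Sum>i<Suc n. mat (Suc n) (Suc n) F $$ (i,0) * cofactor (mat (Suc n) (Suc n) F) i 0)"
    by (rule laplace_expansion_column) auto
  also have "\<dots> = (\<Sum>i<Suc n. F (i,0) * ((-1)^i * det (mat n n (\<lambda>(a,b). F (if a < i then a else Suc a, Suc b)))))"
    by (rule sum.cong) (auto simp: cofactor_def mat_delete_mat0)
  finally show ?thesis .
qed

lemma det_block_lower_zero:
  "(\<And>i j. k \<le> i \<Longrightarrow> j < k \<Longrightarrow> F (i,j) = 0) \<Longrightarrow>
   det (mat (k+N) (k+N) F) = det (mat k k F) * det (mat N N (\<lambda>(i,j). F (k+i, k+j)))"
proof (induction k arbitrary: F)
  case 0
  have "mat N N (\<lambda>(i,j). F (0+i, 0+j)) = mat N N F" by (rule eq_matI) auto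
  then show ?case by (simp add: det_def)
next
  case (Suc k)
  define G where "G i = (\<lambda>(a,b). F (if a < i then a else Suc a, Suc b))" for i
  define Z where "Z = det (mat N N (\<lambda>(a,b). F (Suc k + a, Suc k + b)))"
  have "det (mat (Suc k + N) (Suc k + N) F) =
     (\<Sum>i<Suc k + N. F (i,0) * ((-1)^i * det (mat (k+N) (k+N) (G i))))"
    using det_mat_col0[of "k+N" F] by (simp add: G_def)
  also have "\<dots> = (\<Sum>i<Suc k. F (i,0) * ((-1)^i * det (mat (k+N) (k+N) (G i))))
      + (\<Sum>i<N. F (Suc k + i,0) * ((-1)^(Suc k + i) * det (mat (k+N) (k+N) (G (Suc k + i)))))"
    by (rule sum_split_add)
  also have "\<dots> = (\<Sum>i<Suc k. F (i,0) * ((-1)^i * det (mat (k+N) (k+N) (G i))))"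
    using Suc.prems by simp
  also have "\<dots> = (\<Sum>i<Suc k. F (i,0) * ((-1)^i * (det (mat k k (G i)) * Z)))"
  proof (rule sum.cong)
    fix i assume i: "i \<in> {..<Suc k}"
    have "det (mat (k+N) (k+N) (G i)) = det (mat k k (G i)) * det (mat N N (\<lambda>(a,b). G i (k+a, k+b)))"
      by (rule Suc.IH) (use i Suc.prems in \<open>auto simp: G_def\<close>)
    moreover have "mat N N (\<lambda>(a,b). G i (k+a, k+b)) = mat N N (\<lambda>(a,b). F (Suc k + a, Suc k + b))"
      by (rule eq_matI) (use i in \<open>auto simp: G_def\<close>)
    ultimately show "F (i,0) * ((-1)^i * det (mat (k+N) (k+N) (G i))) =
       F (i,0) * ((-1)^i * (det (mat k k (G i)) * Z))" by (simp add: Z_def)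
  qed simp
  also have "\<dots> = (\<Sum>i<Suc k. F (i,0) * ((-1)^i * det (mat k k (G i)))) * Z"
    by (simp only: sum_distrib_right mult.assoc)
  also have "(\<Sum>i<Suc k. F (i,0) * ((-1)^i * det (mat k k (G i)))) = det (mat (Suc k) (Suc k) F)"
    unfolding G_def by (rule det_mat_col0[symmetric])
  finally show ?case by (simp add: Z_def)
qed

lemma det_block_upper_zero:
  assumes "\<And>i j. i < k \<Longrightarrow> k \<le> j \<Longrightarrow> F (i,j) = 0"
  shows "det (mat (k+N) (k+N) F) = det (mat k k F) * det (mat N N (\<lambda>(i,j). F (k+i, k+j)))"
proof -
  define G where "G = (\<lambda>(i,j). F (j,i))"
  have t1: "transpose_mat (mat (k+N) (k+N) F) = mat (k+N) (k+N) G"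
    unfolding G_def by (rule eq_matI) auto
  have t2: "transpose_mat (mat k k F) = mat k k G"
    unfolding G_def by (rule eq_matI) auto
  have t3: "transpose_mat (mat N N (\<lambda>(i,j). F (k+i, k+j))) = mat N N (\<lambda>(i,j). G (k+i, k+j))"
    unfolding G_def by (rule eq_matI) auto
  have "det (mat (k+N) (k+N) F) = det (transpose_mat (mat (k+N) (k+N) F))"
    by (rule det_transpose[symmetric]) (rule mat_carrier)
  also have "\<dots> = det (mat (k+N) (k+N) G)" unfolding t1 ..
  also have "\<dots> = det (mat k k G) * det (mat N N (\<lambda>(i,j). G (k+i, k+j)))"
    by (rule det_block_lower_zero) (simp add: G_def assms)
  also have "det (mat k k G) = det (mat k k F)"
    unfolding t2[symmetric] by (rule det_transpose) (rule mat_carrier)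
  also have "det (mat N N (\<lambda>(i,j). G (k+i, k+j))) = det (mat N N (\<lambda>(i,j). F (k+i, k+j)))"
    unfolding t3[symmetric] by (rule det_transpose) (rule mat_carrier)
  finally show ?thesis .
qed

definition DR :: "nat \<Rightarrow> (nat \<Rightarrow> 'r::comm_ring_1) set \<Rightarrow> 'r set" where
  "DR N Rel = {det W | W. W \<in> carrier_mat N N \<and> (\<forall>i<N. (\<lambda>j. W $$ (i,j)) \<in> Rel)}"

definition rext :: "nat \<Rightarrow> (nat \<Rightarrow> 'r) set \<Rightarrow> bool" where
  "rext N Rel \<longleftrightarrow> (\<forall>c c'. (\<forall>j<N. c j = c' j) \<longrightarrow> c \<in> Rel \<longrightarrow> c' \<in> Rel)"

lemma det_tail_rel:
  assumes R: "rext N Rel"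
  shows "W \<in> carrier_mat (k+N) (k+N) \<Longrightarrow> (\<forall>i<k+N. (\<lambda>j. W $$ (i, k+j)) \<in> Rel) \<Longrightarrow>
     det W \<in> ideal_gen (DR N (Rel :: (nat \<Rightarrow> 'r::comm_ring_1) set))"
proof (induction k arbitrary: W)
  case 0
  then have "det W \<in> DR N Rel" unfolding DR_def by simp blast
  then show ?case by (rule ideal_gen_base)
next
  case (Suc k)
  have R': "c' \<in> Rel" if "\<forall>j<N. c j = c' j" "c \<in> Rel" for c c'
    using R that unfolding rext_def by blast
  have "det W = (\<Sum>i<Suc k + N. W $$ (i,0) * cofactor W i 0)"
    by (rule laplace_expansion_column) (use Suc.prems in auto)
  also have "\<dots> \<in> ideal_gen (DR N Rel)"
  proof (rule is_ideal_sum[OF ideal_gen_is_ideal])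
    fix i assume i: "i \<in> {..<Suc k + N}"
    let ?W = "mat_delete W i 0"
    have W: "?W \<in> carrier_mat (k+N) (k+N)" using mat_delete_carrier[OF Suc.prems(1)] by simp
    have rowsW: "\<forall>i'<k+N. (\<lambda>j. ?W $$ (i', k+j)) \<in> Rel"
    proof (intro allI impI)
      fix i' assume i': "i' < k+N"
      define i'' where "i'' = (if i' < i then i' else Suc i')"
      have i'': "i'' < Suc k + N" using i' unfolding i''_def by auto
      have 1: "(\<lambda>j. W $$ (i'', Suc k + j)) \<in> Rel"
        using Suc.prems(2) i'' by simp
      have 2: "\<forall>j<N. W $$ (i'', Suc k + j) = ?W $$ (i', k+j)"
        using Suc.prems(1) i' unfolding i''_def by (auto simp: mat_delete_def)
      show "(\<lambda>j. ?W $$ (i', k+j)) \<in> Rel" by (rule R'[OF 2 1])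
    qed
    have "det ?W \<in> ideal_gen (DR N Rel)" by (rule Suc.IH[OF W rowsW])
    then show "W $$ (i,0) * cofactor W i 0 \<in> ideal_gen (DR N Rel)"
      unfolding cofactor_def
      by (rule is_ideal_mult[OF ideal_gen_is_ideal, OF is_ideal_mult[OF ideal_gen_is_ideal]])
  qed
  finally show ?case .
qed

lemma tail_rel:
  assumes m: "module s" and M: "M \<in> carrier_mat K K" and U: "U \<in> carrier_mat K K"
    and K: "K = k + N"
    and rows: "\<And>i. i < K \<Longrightarrow> (\<Sum>l<K. s (M $$ (i,l)) (\<phi> l)) = 0"
    and phi: "\<And>l. l < K \<Longrightarrow> \<phi> l = (\<Sum>j<N. s (U $$ (l, k+j)) (h j))"
    and i: "i < K"
  shows "(\<Sum>j<N. s ((M * U) $$ (i, k+j)) (h j)) = 0"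
proof -
  interpret m: Modules.module s by (rule m)
  have "(\<Sum>j<N. s ((M * U) $$ (i, k+j)) (h j)) = (\<Sum>j<N. s (\<Sum>l<K. M $$ (i,l) * U $$ (l, k+j)) (h j))"
  proof (rule sum.cong[OF refl])
    fix j assume j: "j \<in> {..<N}"
    have "(M * U) $$ (i, k+j) = (\<Sum>l<K. M $$ (i,l) * U $$ (l, k+j))"
      by (rule mult_mat_entry[OF M U]) (use i K j in auto)
    then show "s ((M * U) $$ (i, k+j)) (h j) = s (\<Sum>l<K. M $$ (i,l) * U $$ (l, k+j)) (h j)" by simp
  qed
  also have "\<dots> = (\<Sum>j<N. \<Sum>l<K. s (M $$ (i,l)) (s (U $$ (l, k+j)) (h j)))"
    by (simp add: m.scale_sum_left)
  also have "\<dots> = (\<Sum>l<K. \<Sum>j<N. s (M $$ (i,l)) (s (U $$ (l, k+j)) (h j)))"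
    by (rule sum.swap)
  also have "\<dots> = (\<Sum>l<K. s (M $$ (i,l)) (\<phi> l))"
    by (rule sum.cong) (auto simp: phi m.scale_sum_right)
  also have "\<dots> = 0" by (rule rows[OF i])
  finally show ?thesis .
qed




definition lin :: "('r::comm_ring_1 \<Rightarrow> 'm::ab_group_add \<Rightarrow> 'm) \<Rightarrow> nat \<Rightarrow> (nat \<Rightarrow> 'r) \<Rightarrow> (nat \<Rightarrow> 'm) \<Rightarrow> 'm" where
  "lin s n c g = (\<Sum>i<n. s (c i) (g i))"

definition spn :: "('r::comm_ring_1 \<Rightarrow> 'm::ab_group_add \<Rightarrow> 'm) \<Rightarrow> nat \<Rightarrow> (nat \<Rightarrow> 'm) \<Rightarrow> 'm set" where
  "spn s n g = range (\<lambda>c. lin s n c g)"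

definition relv :: "('r::comm_ring_1 \<Rightarrow> 'm::ab_group_add \<Rightarrow> 'm) \<Rightarrow> nat \<Rightarrow> (nat \<Rightarrow> 'm) \<Rightarrow> (nat \<Rightarrow> 'r) set" where
  "relv s n g = {c. lin s n c g = 0}"

lemma rext_relv: "rext n (relv s n g)"
  unfolding rext_def relv_def lin_def by auto

lemma sum_delta_s:
  assumes "module s"
  shows "(\<Sum>l<(N::nat). s (if l = j then 1 else 0) (h l)) = (if j < N then h j else 0)"
proof -
  interpret m: Modules.module s by (rule assms)
  show ?thesis by (induction N) (auto simp: less_Suc_eq)
qed

lemma gen_in_spn:
  assumes "module s" "i < n"
  shows "g i \<in> spn s n g"
proof -
  have "lin s n (\<lambda>l. if l = i then 1 else 0) g = g i"
    unfolding lin_def using sum_delta_s[OF assms(1), where N=n and j=i and h=g] assms(2) by simp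
  then show ?thesis unfolding spn_def by (metis rangeI)
qed

lemma inv_dets:
  assumes m: "module s" and sp: "spn s n g = spn s N h"
    and Q: "Q \<in> carrier_mat n n" and rows: "\<forall>i<n. (\<lambda>j. Q $$ (i,j)) \<in> relv s n g"
  shows "det Q \<in> ideal_gen (DR N (relv s N h))"
proof -
  interpret m: Modules.module s by (rule m)
  have "\<forall>i. \<exists>c. i < n \<longrightarrow> g i = lin s N c h"
    using gen_in_spn[OF m, of _ n g] sp unfolding spn_def by blast
  then obtain S where S: "\<And>i. i < n \<Longrightarrow> g i = lin s N (S i) h" using choice by metis
  have "\<forall>i. \<exists>c. i < N \<longrightarrow> h i = lin s n c g"
    using gen_in_spn[OF m, of _ N h] sp unfolding spn_def by blast
  then obtain T where T: "\<And>i. i < N \<Longrightarrow> h i = lin s n (T i) g" using choice by metis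
  define K where "K = n + N"
  define \<phi> where "\<phi> l = (if l < n then g l else h (l - n))" for l
  define FM where "FM = (\<lambda>(i,j). if i < n then (if j < n then Q $$ (i,j) else 0)
      else (if j < n then - T (i-n) j else (if i = j then 1 else 0)))"
  define FU where "FU = (\<lambda>(l,j). if j < n then (if l = j then 1 else 0)
      else (if l < n then S l (j-n) else (if l = j then 1 else 0)))"
  define M where "M = mat K K FM"
  define U where "U = mat K K FU"
  have Mc: "M \<in> carrier_mat K K" unfolding M_def by simp
  have Uc: "U \<in> carrier_mat K K" unfolding U_def by simp
  have detM: "det M = det Q"
  proof -
    have "det M = det (mat n n FM) * det (mat N N (\<lambda>(i,j). FM (n+i, n+j)))"
      unfolding M_def K_def by (rule det_block_upper_zero) (auto simp: FM_def)
    also have "mat n n FM = Q"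
      by (rule eq_matI) (use Q in \<open>auto simp: FM_def\<close>)
    also have "mat N N (\<lambda>(i,j). FM (n+i, n+j)) = 1\<^sub>m N"
      by (rule eq_matI) (auto simp: FM_def)
    finally show ?thesis by simp
  qed
  have detU: "det U = 1"
  proof -
    have "det U = det (mat n n FU) * det (mat N N (\<lambda>(i,j). FU (n+i, n+j)))"
      unfolding U_def FU_def K_def by (rule det_block_lower_zero) (auto simp: FU_def)
    also have "mat n n FU = 1\<^sub>m n"
      by (rule eq_matI) (auto simp: FU_def)
    also have "mat N N (\<lambda>(i,j). FU (n+i, n+j)) = 1\<^sub>m N"
      by (rule eq_matI) (auto simp: FU_def)
    finally show ?thesis by simp
  qed
  have rowsM: "(\<Sum>l<K. s (M $$ (i,l)) (\<phi> l)) = 0" if i: "i < K" for i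
  proof -
    have "(\<Sum>l<K. s (M $$ (i,l)) (\<phi> l)) = (\<Sum>l<n. s (M $$ (i,l)) (\<phi> l)) + (\<Sum>l<N. s (M $$ (i,n+l)) (\<phi> (n+l)))"
      unfolding K_def by (rule sum_split_add)
    also have "\<dots> = 0"
    proof (cases "i < n")
      case True
      have "(\<Sum>l<n. s (M $$ (i,l)) (\<phi> l)) = lin s n (\<lambda>j. Q $$ (i,j)) g"
        unfolding lin_def by (rule sum.cong) (use True i in \<open>auto simp: M_def FM_def K_def \<phi>_def\<close>)
      also have "\<dots> = 0" using rows True unfolding relv_def by auto
      finally show ?thesis using True i by (simp add: M_def FM_def K_def)
    next
      case False
      have inN: "i - n < N" using False i K_def by linarith
      have "(\<Sum>l<n. s (M $$ (i,l)) (\<phi> l)) = - lin s n (T (i-n)) g"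
        unfolding lin_def sum_negf[symmetric] by (rule sum.cong) (use False i in \<open>auto simp: M_def FM_def K_def \<phi>_def\<close>)
      also have "\<dots> = - h (i - n)" using T[OF inN] by simp
      finally have 1: "(\<Sum>l<n. s (M $$ (i,l)) (\<phi> l)) = - h (i - n)" .
      have "(\<Sum>l<N. s (M $$ (i,n+l)) (\<phi> (n+l))) = (\<Sum>l<N. s (if l = i - n then 1 else 0) (h l))"
        by (rule sum.cong) (use False i in \<open>auto simp: M_def FM_def K_def \<phi>_def\<close>)
      also have "\<dots> = h (i - n)" using sum_delta_s[OF m, where N=N and j="i-n" and h=h] inN by simp
      finally show ?thesis using 1 by simp
    qed
    finally show ?thesis .
  qed
  have phiU: "\<phi> l = (\<Sum>j<N. s (U $$ (l, n+j)) (h j))" if l: "l < K" for l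
  proof (cases "l < n")
    case True
    then show ?thesis using S[OF True] l by (simp add: \<phi>_def U_def FU_def K_def lin_def)
  next
    case False
    have lN: "l - n < N" using False l K_def by linarith
    have "(\<Sum>j<N. s (U $$ (l, n+j)) (h j)) = (\<Sum>j<N. s (if j = l - n then 1 else 0) (h j))"
      by (rule sum.cong) (use False l in \<open>auto simp: U_def FU_def K_def\<close>)
    also have "\<dots> = h (l - n)" using sum_delta_s[OF m, where N=N and j="l-n" and h=h] lN by simp
    finally show ?thesis using False by (simp add: \<phi>_def)
  qed
  have MU: "M * U \<in> carrier_mat (n + N) (n + N)" using Mc Uc K_def by auto
  have tl: "\<forall>i<n+N. (\<lambda>j. (M * U) $$ (i, n+j)) \<in> relv s N h"
  proof (intro allI impI)
    fix i assume i: "i < n + N"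
    show "(\<lambda>j. (M * U) $$ (i, n+j)) \<in> relv s N h"
      unfolding relv_def lin_def
      using tail_rel[OF m Mc Uc K_def rowsM phiU] i K_def by simp
  qed
  have "det (M * U) \<in> ideal_gen (DR N (relv s N h))"
    by (rule det_tail_rel[OF rext_relv MU tl])
  moreover have "det (M * U) = det Q" using det_mult[OF Mc Uc] detM detU by simp
  ultimately show ?thesis by simp
qed

lemma inv_sub:
  assumes m: "module s" and sp: "spn s n g = spn s N h" and x: "x \<in> DR n (relv s n g)"
  shows "x \<in> ideal_gen (DR N (relv s N h))"
proof -
  from x obtain W where "x = det W" "W \<in> carrier_mat n n" "\<forall>i<n. (\<lambda>j. W $$ (i,j)) \<in> relv s n g"
    unfolding DR_def by blast
  then show ?thesis using inv_dets[OF m sp] by blast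
qed

lemma inv_ideal:
  assumes m: "module s" and sp: "spn s n g = spn s N h"
  shows "ideal_gen (DR n (relv s n g)) = ideal_gen (DR N (relv s N h))"
proof
  show "ideal_gen (DR n (relv s n g)) \<subseteq> ideal_gen (DR N (relv s N h))"
    by (rule ideal_gen_subset) (use inv_sub[OF m sp] in blast)
  show "ideal_gen (DR N (relv s N h)) \<subseteq> ideal_gen (DR n (relv s n g))"
    by (rule ideal_gen_subset) (use inv_sub[OF m sp[symmetric]] in blast)
qed





lemma sum_if_eq: "(\<Sum>l<(N::nat). if l = j then f l else 0) = (if j < N then f j else 0)"
  by (induction N) (auto simp: less_Suc_eq)

lemma mk_hom:
  "module s1 \<Longrightarrow> module s2 \<Longrightarrow> (\<And>a b. f (a + b) = f a + f b) \<Longrightarrow> (\<And>r b. f (s1 r b) = s2 r (f b))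
   \<Longrightarrow> module_hom s1 s2 f"
  by (simp add: module_hom_def module_hom_axioms_def)

lemma lin_hom:
  assumes "module_hom s1 s2 f"
  shows "f (lin s1 n c v) = lin s2 n c (\<lambda>i. f (v i))"
proof -
  interpret H: module_hom s1 s2 f by (rule assms)
  show ?thesis unfolding lin_def by (simp add: H.sum H.scale)
qed

lemma lin_cong: "(\<And>i. i < n \<Longrightarrow> c i = d i) \<Longrightarrow> (\<And>i. i < n \<Longrightarrow> v i = w i) \<Longrightarrow> lin s n c v = lin s n d w"
  unfolding lin_def by (rule sum.cong) auto

lemma lin_add:
  assumes "module s"
  shows "lin s n c v + lin s n d v = lin s n (\<lambda>i. c i + d i) v"
proof -
  interpret m: Modules.module s by (rule assms)
  show ?thesis unfolding lin_def by (simp add: sum.distrib[symmetric] m.scale_left_distrib)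
qed

lemma lin_diff:
  assumes "module s"
  shows "lin s n c v - lin s n d v = lin s n (\<lambda>i. c i - d i) v"
proof -
  interpret m: Modules.module s by (rule assms)
  show ?thesis unfolding lin_def by (simp add: sum_subtractf[symmetric] m.scale_left_diff_distrib)
qed

lemma lin_add_vec:
  assumes "module s"
  shows "lin s n c (\<lambda>i. v i + w i) = lin s n c v + lin s n c w"
proof -
  interpret m: Modules.module s by (rule assms)
  show ?thesis unfolding lin_def by (simp add: sum.distrib m.scale_right_distrib)
qed

lemma lin_lin:
  assumes "module s" and "\<And>i. i < n \<Longrightarrow> v i = lin s N (C i) h"
  shows "lin s n c v = lin s N (\<lambda>j. \<Sum>i<n. c i * C i j) h"
proof -
  interpret m: Modules.module s by (rule assms(1))
  have "lin s n c v = (\<Sum>i<n. s (c i) (\<Sum>j<N. s (C i j) (h j)))"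
    unfolding lin_def by (rule sum.cong) (auto simp: assms(2) lin_def)
  also have "\<dots> = (\<Sum>i<n. \<Sum>j<N. s (c i * C i j) (h j))"
    by (simp add: m.scale_sum_right)
  also have "\<dots> = (\<Sum>j<N. \<Sum>i<n. s (c i * C i j) (h j))"
    by (rule sum.swap)
  also have "\<dots> = lin s N (\<lambda>j. \<Sum>i<n. c i * C i j) h"
    unfolding lin_def by (simp add: m.scale_sum_left)
  finally show ?thesis .
qed

lemma lin_split: "lin s (m+n) c v = lin s m c v + lin s n (\<lambda>j. c (m+j)) (\<lambda>j. v (m+j))"
  unfolding lin_def by (rule sum_split_add)

lemma lin_zero_coef:
  assumes "module s" shows "lin s n (\<lambda>_. 0) v = 0"
proof -
  interpret m: Modules.module s by (rule assms)
  show ?thesis unfolding lin_def by simp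
qed

lemma lin_in_spn:
  assumes m: "module s" and v: "\<forall>i<n. v i \<in> spn s N h"
  shows "lin s n c v \<in> spn s N h"
proof -
  have "\<forall>i. \<exists>d. i < n \<longrightarrow> v i = lin s N d h" using v unfolding spn_def by blast
  then obtain C where C: "\<And>i. i < n \<Longrightarrow> v i = lin s N (C i) h" by metis
  have "lin s n c v = lin s N (\<lambda>j. \<Sum>i<n. c i * C i j) h" by (rule lin_lin[OF m C])
  then show ?thesis unfolding spn_def by blast
qed

lemma spn_diff:
  assumes m: "module s" and "a \<in> spn s N h" "b \<in> spn s N h"
  shows "a - b \<in> spn s N h"
proof -
  obtain c d where "a = lin s N c h" "b = lin s N d h" using assms(2,3) unfolding spn_def by auto
  then have "a - b = lin s N (\<lambda>i. c i - d i) h" using lin_diff[OF m] by simp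
  then show ?thesis unfolding spn_def by blast
qed

lemma gen_spn: "(\<forall>x. \<exists>c. x = (\<Sum>i<n. s (c i) (g i))) \<longleftrightarrow> spn s n g = UNIV"
  unfolding spn_def lin_def by (simp add: surj_def)



lemma sqdet_det: "sqdet n Q = det (mat n n (\<lambda>(i,j). Q i j))"
proof -
  have "det (mat n n (\<lambda>(i,j). Q i j)) = (\<Sum>p\<in>{p. p permutes {0..<n}}.
      signof p * (\<Prod>i=0..<n. mat n n (\<lambda>(i,j). Q i j) $$ (i, p i)))"
    by (rule det_def') simp
  also have "\<dots> = (\<Sum>p\<in>{p. p permutes {0..<n}}. signof p * (\<Prod>i=0..<n. Q i (p i)))"
  proof (rule sum.cong[OF refl])
    fix p assume "p \<in> {p. p permutes {0..<n}}"
    then have pi: "\<forall>i<n. p i < n" using permutes_in_image by fastforce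
    have "(\<Prod>i=0..<n. mat n n (\<lambda>(i,j). Q i j) $$ (i, p i)) = (\<Prod>i=0..<n. Q i (p i))"
      by (rule prod.cong[OF refl]) (use pi in auto)
    then show "signof p * (\<Prod>i=0..<n. mat n n (\<lambda>(i,j). Q i j) $$ (i, p i)) =
      signof p * (\<Prod>i=0..<n. Q i (p i))" by simp
  qed
  finally show ?thesis unfolding sqdet_def by (simp add: atLeast0LessThan)
qed

lemma Fitt_eq:
  assumes mA: "module sA" and sp: "spn sA n \<alpha> = UNIV"
  shows "Fitt sA = ideal_gen (DR n (relv sA n \<alpha>))"
proof
  show "Fitt sA \<subseteq> ideal_gen (DR n (relv sA n \<alpha>))"
    unfolding Fitt_def
  proof (rule ideal_gen_subset, rule subsetI)
    fix z assume "z \<in> {sqdet n Q | n Q. \<exists>g. (\<forall>x. \<exists>c. x = (\<Sum>i<n. sA (c i) (g i)))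
       \<and> (\<forall>k<n. (\<Sum>i<n. sA (Q k i) (g i)) = 0)}"
    then obtain n' Q g where z: "z = sqdet n' Q" and gen: "\<forall>x. \<exists>c. x = (\<Sum>i<n'. sA (c i) (g i))"
      and rel: "\<forall>k<n'. (\<Sum>i<n'. sA (Q k i) (g i)) = 0" by blast
    have spg: "spn sA n' g = spn sA n \<alpha>" using gen_spn[THEN iffD1, OF gen] sp by simp
    let ?W = "mat n' n' (\<lambda>(i,j). Q i j)"
    have rows: "\<forall>i<n'. (\<lambda>j. ?W $$ (i,j)) \<in> relv sA n' g"
    proof (intro allI impI)
      fix i assume i: "i < n'"
      have "lin sA n' (\<lambda>j. ?W $$ (i,j)) g = (\<Sum>j<n'. sA (Q i j) (g j))"
        unfolding lin_def by (rule sum.cong) (use i in auto)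
      then show "(\<lambda>j. ?W $$ (i,j)) \<in> relv sA n' g" using rel i unfolding relv_def by simp
    qed
    have Wc: "?W \<in> carrier_mat n' n'" by simp
    have zW: "z = det ?W" using z sqdet_det by simp
    have "z \<in> DR n' (relv sA n' g)"
      unfolding DR_def by (rule CollectI, rule exI[of _ ?W]) (use zW Wc rows in simp)
    then show "z \<in> ideal_gen (DR n (relv sA n \<alpha>))" by (rule inv_sub[OF mA spg])
  qed
next
  show "ideal_gen (DR n (relv sA n \<alpha>)) \<subseteq> Fitt sA"
    unfolding Fitt_def
  proof (rule ideal_gen_subset, rule subsetI)
    fix z assume "z \<in> DR n (relv sA n \<alpha>)"
    then obtain W where z: "z = det W" and W: "W \<in> carrier_mat n n"
      "\<forall>i<n. (\<lambda>j. W $$ (i,j)) \<in> relv sA n \<alpha>" unfolding DR_def by blast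
    have Wm: "mat n n (\<lambda>(i,j). W $$ (i,j)) = W" using W by (auto intro!: eq_matI)
    have 1: "z = sqdet n (\<lambda>i j. W $$ (i,j))" unfolding sqdet_det z using Wm by simp
    have 2: "\<forall>x. \<exists>c. x = (\<Sum>i<n. sA (c i) (\<alpha> i))" using sp by (rule gen_spn[THEN iffD2])
    have 3: "\<forall>k<n. (\<Sum>i<n. sA (W $$ (k,i)) (\<alpha> i)) = 0" using W(2) unfolding relv_def lin_def by auto
    show "z \<in> ideal_gen {sqdet n Q | n Q. \<exists>g. (\<forall>x. \<exists>c. x = (\<Sum>i<n. sA (c i) (g i)))
       \<and> (\<forall>k<n. (\<Sum>i<n. sA (Q k i) (g i)) = 0)}"
      by (rule ideal_gen_base, rule CollectI, rule exI[of _ n], rule exI[of _ "\<lambda>i j. W $$ (i,j)"])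
        (use 1 2 3 in \<open>intro conjI exI[of _ \<alpha>], auto\<close>)
  qed
qed



lemma Fitt_zero:
  assumes "\<not> (\<exists>n \<alpha>. spn sA n \<alpha> = UNIV)"
  shows "Fitt sA = {0}"
proof -
  have "{sqdet n Q | n Q. \<exists>g. (\<forall>x. \<exists>c. x = (\<Sum>i<n. sA (c i) (g i)))
       \<and> (\<forall>k<n. (\<Sum>i<n. sA (Q k i) (g i)) = 0)} = {}"
    using assms gen_spn by blast
  then show ?thesis unfolding Fitt_def by (simp only: ideal_gen_empty)
qed

lemma quad_rel_col:
  assumes P: "\<forall>c. lin sY m c x = 0 \<longleftrightarrow> (\<exists>d. \<forall>i<m. c i = (\<Sum>j<m. P i j * d j))" and j: "j < m"
  shows "lin sY m (\<lambda>i. P i j) x = 0"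
proof -
  have "\<forall>i<m. P i j = (\<Sum>l<m. P i l * (if l = j then 1 else 0))"
  proof (intro allI impI)
    fix i assume "i < m"
    have "(\<Sum>l<m. P i l * (if l = j then 1 else 0)) = (\<Sum>l<m. if l = j then P i l else 0)"
      by (rule sum.cong) auto
    then show "P i j = (\<Sum>l<m. P i l * (if l = j then 1 else 0))" using j by (simp add: sum_if_eq)
  qed
  then have "\<exists>d. \<forall>i<m. P i j = (\<Sum>l<m. P i l * d l)"
    by (intro exI[of _ "\<lambda>l. if l = j then 1 else 0"])
  then show ?thesis using P[rule_format, of "\<lambda>i. P i j"] by simp
qed




lemma Fitt_quad:
  assumes mY: "module sY" and x: "spn sY m x = UNIV"
    and P: "\<forall>c. lin sY m c x = 0 \<longleftrightarrow> (\<exists>d. \<forall>i<m. c i = (\<Sum>j<m. P i j * d j))"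
  shows "Fitt sY = ideal_gen {sqdet m P}"
proof -
  define Pm where "Pm = mat m m (\<lambda>(i,j). P i j)"
  define PT where "PT = mat m m (\<lambda>(j,i). P i j)"
  have PTc: "PT \<in> carrier_mat m m" unfolding PT_def by simp
  have "transpose_mat Pm = PT" unfolding Pm_def PT_def by (rule eq_matI) auto
  then have dPT: "det PT = det Pm" using det_transpose[of Pm m] unfolding Pm_def by simp
  have "ideal_gen (DR m (relv sY m x)) = ideal_gen {det Pm}"
  proof
    show "ideal_gen (DR m (relv sY m x)) \<subseteq> ideal_gen {det Pm}"
    proof (rule ideal_gen_subset, rule subsetI)
      fix z assume "z \<in> DR m (relv sY m x)"
      then obtain W where z: "z = det W" and W: "W \<in> carrier_mat m m"
        "\<forall>i<m. (\<lambda>j. W $$ (i,j)) \<in> relv sY m x" unfolding DR_def by blast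
      have "\<forall>r. \<exists>d. r < m \<longrightarrow> (\<forall>i<m. W $$ (r,i) = (\<Sum>j<m. P i j * d j))"
      proof
        fix r show "\<exists>d. r < m \<longrightarrow> (\<forall>i<m. W $$ (r,i) = (\<Sum>j<m. P i j * d j))"
        proof (cases "r < m")
          case True
          then have "lin sY m (\<lambda>j. W $$ (r,j)) x = 0" using W(2) unfolding relv_def by blast
          then have "\<exists>d. \<forall>i<m. W $$ (r,i) = (\<Sum>j<m. P i j * d j)"
            using P[rule_format, of "\<lambda>j. W $$ (r,j)"] by simp
          then show ?thesis by blast
        qed simp
      qed
      from choice[OF this] obtain D where D0: "\<forall>r. r < m \<longrightarrow> (\<forall>i<m. W $$ (r,i) = (\<Sum>j<m. P i j * D r j))"
        by blast
      have D: "\<And>r i. r < m \<Longrightarrow> i < m \<Longrightarrow> W $$ (r,i) = (\<Sum>j<m. P i j * D r j)" using D0 by blast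
      define Dm where "Dm = mat m m (\<lambda>(r,j). D r j)"
      have Dc: "Dm \<in> carrier_mat m m" unfolding Dm_def by simp
      have "W = Dm * PT"
      proof (rule eq_matI)
        fix r i assume ri: "r < dim_row (Dm * PT)" "i < dim_col (Dm * PT)"
        then have r: "r < m" and i: "i < m" using Dc PTc by auto
        have "(Dm * PT) $$ (r,i) = (\<Sum>l<m. Dm $$ (r,l) * PT $$ (l,i))"
          by (rule mult_mat_entry[OF Dc PTc r i])
        also have "\<dots> = (\<Sum>l<m. P i l * D r l)"
          by (rule sum.cong) (use r i in \<open>auto simp: Dm_def PT_def mult.commute\<close>)
        finally show "W $$ (r,i) = (Dm * PT) $$ (r,i)" using D[OF r i] by simp
      qed (use W Dc PTc in auto)
      then have "z = det Dm * det Pm" using z det_mult[OF Dc PTc] dPT by simp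
      then show "z \<in> ideal_gen {det Pm}"
        using is_ideal_mult[OF ideal_gen_is_ideal ideal_gen_base[of "det Pm" "{det Pm}"]] by simp
    qed
    show "ideal_gen {det Pm} \<subseteq> ideal_gen (DR m (relv sY m x))"
    proof (rule ideal_gen_subset, rule subsetI)
      fix z assume "z \<in> {det Pm}"
      then have z: "z = det PT" using dPT by simp
      have "\<forall>j<m. (\<lambda>i. PT $$ (j,i)) \<in> relv sY m x"
      proof (intro allI impI)
        fix j assume j: "j < m"
        have "lin sY m (\<lambda>i. PT $$ (j,i)) x = lin sY m (\<lambda>i. P i j) x"
          by (rule lin_cong) (use j in \<open>auto simp: PT_def\<close>)
        then show "(\<lambda>i. PT $$ (j,i)) \<in> relv sY m x"
          using quad_rel_col[OF P j] unfolding relv_def by simp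
      qed
      then have "z \<in> DR m (relv sY m x)" unfolding DR_def z using PTc by blast
      then show "z \<in> ideal_gen (DR m (relv sY m x))" by (rule ideal_gen_base)
    qed
  qed
  then show ?thesis using Fitt_eq[OF mY x] sqdet_det[of m P] unfolding Pm_def by simp
qed

lemma ext_span:
  assumes m: "module s" and mA: "module sA" and mY: "module sY"
    and pp: "module_hom s sY pp" and io: "module_hom sA s io"
    and cl: "\<forall>n c v. (\<forall>i<n. v i \<in> S) \<longrightarrow> lin s n c v \<in> S"
    and cld: "\<forall>a b. a \<in> S \<longrightarrow> b \<in> S \<longrightarrow> a - b \<in> S"
    and beta: "\<forall>i<m. \<beta> i \<in> S \<and> pp (\<beta> i) = x i"
    and x: "spn sY m x = UNIV"
    and ker: "range io = {v\<in>S. pp v = 0}"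
    and al: "spn sA n \<alpha> = UNIV"
  shows "spn s (m+n) (\<lambda>l. if l < m then \<beta> l else io (\<alpha> (l - m))) = S"
proof
  interpret pp: module_hom s sY pp by (rule pp)
  let ?\<phi> = "\<lambda>l. if l < m then \<beta> l else io (\<alpha> (l - m))"
  have cl': "lin s n' c v \<in> S" if "\<forall>i<n'. v i \<in> S" for n' c v using cl that by blast
  have phS: "\<forall>l<m+n. ?\<phi> l \<in> S" using beta ker by auto
  show "spn s (m+n) ?\<phi> \<subseteq> S"
  proof
    fix y assume "y \<in> spn s (m+n) ?\<phi>"
    then obtain c where "y = lin s (m+n) c ?\<phi>" unfolding spn_def by blast
    then show "y \<in> S" using cl'[OF phS] by simp
  qed
  show "S \<subseteq> spn s (m+n) ?\<phi>"
  proof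
    fix v assume v: "v \<in> S"
    have "pp v \<in> spn sY m x" using x by simp
    then obtain c where c: "pp v = lin sY m c x" unfolding spn_def by blast
    have "\<forall>i<m. \<beta> i \<in> S" using beta by blast
    then have b: "lin s m c \<beta> \<in> S" by (rule cl')
    have "pp (v - lin s m c \<beta>) = pp v - lin sY m c (\<lambda>i. pp (\<beta> i))"
      by (simp add: pp.diff lin_hom[OF pp])
    also have "lin sY m c (\<lambda>i. pp (\<beta> i)) = lin sY m c x"
      by (rule lin_cong) (use beta in auto)
    finally have "pp (v - lin s m c \<beta>) = 0" using c by simp
    moreover have "v - lin s m c \<beta> \<in> S" using cld v b by blast
    ultimately have "v - lin s m c \<beta> \<in> range io" using ker by blast
    then obtain a where a: "io a = v - lin s m c \<beta>" by (metis rangeE)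
    have "a \<in> spn sA n \<alpha>" using al by simp
    then obtain e where e: "a = lin sA n e \<alpha>" unfolding spn_def by blast
    have "v = lin s m c \<beta> + io a" using a by simp
    also have "io a = lin s n e (\<lambda>k. io (\<alpha> k))" unfolding e by (rule lin_hom[OF io])
    also have "lin s m c \<beta> + lin s n e (\<lambda>k. io (\<alpha> k)) =
        lin s (m+n) (\<lambda>l. if l < m then c l else e (l - m)) ?\<phi>"
      unfolding lin_split by (intro arg_cong2[where f="(+)"] lin_cong) auto
    finally show "v \<in> spn s (m+n) ?\<phi>" unfolding spn_def by blast
  qed
qed


lemma lin_delta_neg:
  assumes m: "module s" and j: "j < n"
  shows "lin s n (\<lambda>k. if k = j then -1 else 0) v = - v j"
proof -
  interpret m: Modules.module s by (rule m)
  have "lin s n (\<lambda>k. if k = j then -1 else 0) v = (\<Sum>k<n. if k = j then - v k else 0)"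
    unfolding lin_def by (rule sum.cong) auto
  also have "\<dots> = - v j" using j by (simp add: sum_if_eq)
  finally show ?thesis .
qed

lemma sum_if_shift:
  "(\<Sum>l<(m::nat). (f l :: 'a::comm_ring_1) * (if c = N + l then a else 0)) = (if N \<le> c \<and> c - N < m then f (c - N) * a else 0)"
proof (cases "N \<le> c")
  case True
  have "(\<Sum>l<m. f l * (if c = N + l then a else 0)) = (\<Sum>l<m. if l = c - N then f l * a else 0)"
    by (rule sum.cong) (use True in auto)
  then show ?thesis using True by (simp add: sum_if_eq)
next
  case False
  then show ?thesis by simp
qed




lemma G_main:
  assumes m: "module s" and mA: "module sA" and mY: "module sY"
    and pp: "module_hom s sY pp" and io: "module_hom sA s io" and inj: "inj io"
    and S: "spn s N h = S"
    and surj: "\<forall>y. \<exists>v\<in>S. pp v = y"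
    and ker: "range io = {v\<in>S. pp v = 0}"
    and x: "spn sY m x = UNIV"
    and P: "\<forall>c. lin sY m c x = 0 \<longleftrightarrow> (\<exists>d. \<forall>i<m. c i = (\<Sum>j<m. P i j * d j))"
  shows "ideal_gen (DR N (relv s N h)) = ideal_prod (Fitt sA) (ideal_gen {sqdet m P})"
proof -
  interpret ms: Modules.module s by (rule m)
  interpret pp: module_hom s sY pp by (rule pp)
  interpret io: module_hom sA s io by (rule io)
  have cl: "\<forall>n c v. (\<forall>i<n. v i \<in> S) \<longrightarrow> lin s n c v \<in> S" using lin_in_spn[OF m] S by blast
  have cld: "\<forall>a b. a \<in> S \<longrightarrow> b \<in> S \<longrightarrow> a - b \<in> S" using spn_diff[OF m] S by blast
  have hS: "h k \<in> S" if "k < N" for k using gen_in_spn[OF m that] S by blast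
  have ioS: "io a \<in> S" for a using ker by blast
  have ppo: "pp (io a) = 0" for a using ker by blast
  have "\<forall>i. \<exists>v. v \<in> S \<and> pp v = x i" using surj by blast
  then obtain \<beta> where \<beta>: "\<And>i. \<beta> i \<in> S \<and> pp (\<beta> i) = x i" by metis
  have \<beta>1: "\<beta> i \<in> S" and \<beta>2: "pp (\<beta> i) = x i" for i using \<beta> by auto
  have xg: "\<exists>c. y = lin sY m c x" for y using x unfolding spn_def by auto
  have "\<forall>k. \<exists>c. pp (h k) = lin sY m c x" using xg by metis
  then obtain C where C: "\<And>k. pp (h k) = lin sY m (C k) x" by metis
  have ppb: "pp (lin s m c \<beta>) = lin sY m c x" for c
    using lin_hom[OF pp, of m c \<beta>] by (simp add: \<beta>2)
  have bS: "lin s m c \<beta> \<in> S" for c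
  proof -
    have "\<forall>i<m. \<beta> i \<in> S" using \<beta>1 by blast
    then show ?thesis using lin_in_spn[OF m, of m \<beta> N h c] S by simp
  qed
  define w where "w l = (if l < N then h l - lin s m (C l) \<beta> else lin s m (\<lambda>i. P i (l - N)) \<beta>)" for l
  have wr: "w l \<in> range io" if l: "l < N + m" for l
  proof (cases "l < N")
    case True
    have "w l \<in> S" using cld hS[OF True] bS True by (simp add: w_def)
    moreover have "pp (w l) = 0" using True by (simp add: w_def pp.diff ppb C)
    ultimately show ?thesis using ker by blast
  next
    case False
    have lm: "l - N < m" using False l by linarith
    have "w l \<in> S" using bS False by (simp add: w_def)
    moreover have "pp (w l) = 0" using False quad_rel_col[OF P lm] by (simp add: w_def ppb)
    ultimately show ?thesis using ker by blast
  qed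
  define \<alpha> where "\<alpha> l = inv_into UNIV io (w l)" for l
  have io\<alpha>: "io (\<alpha> l) = w l" if "l < N + m" for l
    unfolding \<alpha>_def using wr[OF that] by (rule f_inv_into_f)
  define n where "n = N + m"
  have spa: "a \<in> spn sA n \<alpha>" for a
  proof -
    obtain e where e: "io a = lin s N e h" using ioS[of a] S unfolding spn_def by auto
    have hsplit: "h k = io (\<alpha> k) + lin s m (C k) \<beta>" if k: "k < N" for k
      using io\<alpha>[of k] k by (simp add: w_def)
    have "lin s N e h = lin s N e (\<lambda>k. io (\<alpha> k) + lin s m (C k) \<beta>)"
      by (rule lin_cong) (auto simp: hsplit)
    also have "\<dots> = lin s N e (\<lambda>k. io (\<alpha> k)) + lin s N e (\<lambda>k. lin s m (C k) \<beta>)"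
      by (rule lin_add_vec[OF m])
    also have "lin s N e (\<lambda>k. io (\<alpha> k)) = io (lin sA N e \<alpha>)"
      by (rule lin_hom[OF io, symmetric])
    also have "lin s N e (\<lambda>k. lin s m (C k) \<beta>) = lin s m (\<lambda>i. \<Sum>k<N. e k * C k i) \<beta>"
      by (rule lin_lin[OF m]) simp
    finally have ea: "io a = io (lin sA N e \<alpha>) + lin s m (\<lambda>i. \<Sum>k<N. e k * C k i) \<beta>"
      using e by simp
    define c where "c = (\<lambda>i. \<Sum>k<N. e k * C k i)"
    have ea2: "io a = io (lin sA N e \<alpha>) + lin s m c \<beta>" using ea unfolding c_def .
    have "pp (io a) = pp (io (lin sA N e \<alpha>)) + lin sY m c x"
      using ea2 by (simp add: pp.add ppb)
    then have "lin sY m c x = 0" by (simp add: ppo)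
    then obtain d where d: "\<forall>i<m. c i = (\<Sum>j<m. P i j * d j)" using P[rule_format, of c] by blast
    have "lin s m c \<beta> = lin s m (\<lambda>i. \<Sum>j<m. d j * P i j) \<beta>"
      by (rule lin_cong) (auto simp: d mult.commute)
    also have "\<dots> = lin s m d (\<lambda>j. lin s m (\<lambda>i. P i j) \<beta>)"
      by (rule lin_lin[OF m, symmetric]) simp
    also have "\<dots> = lin s m d (\<lambda>j. io (\<alpha> (N + j)))"
      by (rule lin_cong) (auto simp: io\<alpha> w_def)
    also have "\<dots> = io (lin sA m d (\<lambda>j. \<alpha> (N + j)))"
      by (rule lin_hom[OF io, symmetric])
    finally have "io a = io (lin sA N e \<alpha> + lin sA m d (\<lambda>j. \<alpha> (N+j)))"
      using ea2 by (simp add: io.add)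
    then have "a = lin sA N e \<alpha> + lin sA m d (\<lambda>j. \<alpha> (N+j))" using inj by (simp add: inj_eq)
    also have "\<dots> = lin sA n (\<lambda>l. if l < N then e l else d (l - N)) \<alpha>"
      unfolding n_def lin_split by (intro arg_cong2[where f="(+)"] lin_cong) auto
    finally show "a \<in> spn sA n \<alpha>" unfolding spn_def by blast
  qed
  then have sp\<alpha>: "spn sA n \<alpha> = UNIV" by blast
  define \<phi> where "\<phi> l = (if l < m then \<beta> l else io (\<alpha> (l - m)))" for l
  have sp\<phi>: "spn s (m+n) \<phi> = S"
    unfolding \<phi>_def by (rule ext_span[OF m mA mY pp io cl cld _ x ker sp\<alpha>]) (use \<beta> in auto)
  have inv: "ideal_gen (DR N (relv s N h)) = ideal_gen (DR (m+n) (relv s (m+n) \<phi>))"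
    by (rule inv_ideal[OF m]) (simp add: S sp\<phi>)
  have FA: "Fitt sA = ideal_gen (DR n (relv sA n \<alpha>))" by (rule Fitt_eq[OF mA sp\<alpha>])
  define Pm where "Pm = mat m m (\<lambda>(i,j). P i j)"
  have sq: "sqdet m P = det Pm" unfolding Pm_def by (rule sqdet_det)
  define K where "K = m + n"
  define FZ where "FZ q = (\<lambda>(r,c). if r < m then (if c < m then P c r else (if c - m = N + r then -1 else 0))
      else (if c < m then 0 else q (r - m) (c - m)))" for q
  have detFZ: "det (mat K K (FZ q)) = det Pm * det (mat n n (\<lambda>(i,j). q i j))" for q
  proof -
    have "det (mat (m+n) (m+n) (FZ q)) = det (mat m m (FZ q)) * det (mat n n (\<lambda>(i,j). FZ q (m+i, m+j)))"
      by (rule det_block_lower_zero) (simp add: FZ_def)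
    moreover have "mat m m (FZ q) = transpose_mat Pm" unfolding Pm_def FZ_def by (rule eq_matI) auto
    moreover have "det (transpose_mat Pm) = det Pm" unfolding Pm_def by (rule det_transpose) (rule mat_carrier)
    moreover have "mat n n (\<lambda>(i,j). FZ q (m+i, m+j)) = mat n n (\<lambda>(i,j). q i j)"
      unfolding FZ_def by (rule eq_matI) auto
    ultimately show ?thesis unfolding K_def by simp
  qed
  have linK: "lin s K c \<phi> = lin s m c \<beta> + io (lin sA n (\<lambda>k. c (m+k)) \<alpha>)" for c
  proof -
    have "lin s K c \<phi> = lin s m c \<phi> + lin s n (\<lambda>k. c (m+k)) (\<lambda>k. \<phi> (m+k))"
      unfolding K_def by (rule lin_split)
    also have "lin s m c \<phi> = lin s m c \<beta>" by (rule lin_cong) (auto simp: \<phi>_def)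
    also have "lin s n (\<lambda>k. c (m+k)) (\<lambda>k. \<phi> (m+k)) = lin s n (\<lambda>k. c (m+k)) (\<lambda>k. io (\<alpha> k))"
      by (rule lin_cong) (auto simp: \<phi>_def)
    also have "\<dots> = io (lin sA n (\<lambda>k. c (m+k)) \<alpha>)" by (rule lin_hom[OF io, symmetric])
    finally show ?thesis .
  qed
  have rowsZ1: "lin s K (\<lambda>c. FZ q (r,c)) \<phi> = 0" if r: "r < m" for q r
  proof -
    have "lin s m (\<lambda>c. FZ q (r,c)) \<beta> = lin s m (\<lambda>i. P i r) \<beta>"
      by (rule lin_cong) (auto simp: FZ_def r)
    moreover have "lin sA n (\<lambda>k. FZ q (r, m+k)) \<alpha> = lin sA n (\<lambda>k. if k = N + r then -1 else 0) \<alpha>"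
      by (rule lin_cong) (auto simp: FZ_def r)
    moreover have "lin sA n (\<lambda>k. if k = N + r then -1 else 0) \<alpha> = - \<alpha> (N + r)"
      by (rule lin_delta_neg[OF mA]) (use r in \<open>simp add: n_def\<close>)
    moreover have "io (\<alpha> (N + r)) = lin s m (\<lambda>i. P i r) \<beta>"
      using io\<alpha>[of "N + r"] r by (simp add: w_def)
    ultimately show ?thesis unfolding linK by (simp add: io.neg)
  qed
  have rowsZ2: "lin s K (\<lambda>c. FZ q (r,c)) \<phi> = io (lin sA n (q (r - m)) \<alpha>)" if r: "\<not> r < m" for q r
  proof -
    have "lin s m (\<lambda>c. FZ q (r,c)) \<beta> = lin s m (\<lambda>_. 0) \<beta>"
      by (rule lin_cong) (auto simp: FZ_def r)
    moreover have "lin sA n (\<lambda>k. FZ q (r, m+k)) \<alpha> = lin sA n (q (r - m)) \<alpha>"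
      by (rule lin_cong) (auto simp: FZ_def r)
    ultimately show ?thesis unfolding linK by (simp add: lin_zero_coef[OF m])
  qed
  have main: "ideal_gen (DR K (relv s K \<phi>)) = ideal_prod (ideal_gen (DR n (relv sA n \<alpha>))) (ideal_gen {det Pm})"
  proof
    show "ideal_prod (ideal_gen (DR n (relv sA n \<alpha>))) (ideal_gen {det Pm}) \<subseteq> ideal_gen (DR K (relv s K \<phi>))"
      unfolding ideal_prod_gen
    proof (rule ideal_gen_subset, rule subsetI)
      fix z assume "z \<in> {x * y | x y. x \<in> DR n (relv sA n \<alpha>) \<and> y \<in> {det Pm}}"
      then obtain Q where z: "z = det Q * det Pm" and Q: "Q \<in> carrier_mat n n"
        "\<forall>i<n. (\<lambda>j. Q $$ (i,j)) \<in> relv sA n \<alpha>" unfolding DR_def by blast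
      define q where "q i j = Q $$ (i,j)" for i j
      have Qq: "mat n n (\<lambda>(i,j). q i j) = Q" unfolding q_def using Q(1) by (auto intro!: eq_matI)
      have "z = det (mat K K (FZ q))" using z detFZ[of q] Qq by (simp add: mult.commute)
      moreover have "\<forall>r<K. (\<lambda>c. mat K K (FZ q) $$ (r,c)) \<in> relv s K \<phi>"
      proof (intro allI impI)
        fix r assume r: "r < K"
        have "lin s K (\<lambda>c. mat K K (FZ q) $$ (r,c)) \<phi> = lin s K (\<lambda>c. FZ q (r,c)) \<phi>"
          by (rule lin_cong) (use r in auto)
        also have "\<dots> = 0"
        proof (cases "r < m")
          case True then show ?thesis by (rule rowsZ1)
        next
          case False
          have "r - m < n" using False r K_def by linarith
          then have "lin sA n (q (r - m)) \<alpha> = 0" using Q(2) unfolding relv_def q_def by auto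
          then show ?thesis using rowsZ2[OF False] by simp
        qed
        finally show "(\<lambda>c. mat K K (FZ q) $$ (r,c)) \<in> relv s K \<phi>" unfolding relv_def by simp
      qed
      ultimately have "z \<in> DR K (relv s K \<phi>)" unfolding DR_def by (intro CollectI exI[of _ "mat K K (FZ q)"]) auto
      then show "z \<in> ideal_gen (DR K (relv s K \<phi>))" by (rule ideal_gen_base)
    qed
  next
    show "ideal_gen (DR K (relv s K \<phi>)) \<subseteq> ideal_prod (ideal_gen (DR n (relv sA n \<alpha>))) (ideal_gen {det Pm})"
    proof (rule ideal_gen_min[OF _ subsetI])
      show "is_ideal (ideal_prod (ideal_gen (DR n (relv sA n \<alpha>))) (ideal_gen {det Pm}))"
        unfolding ideal_prod_def by (rule ideal_gen_is_ideal)
    next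
      fix z assume "z \<in> DR K (relv s K \<phi>)"
      then obtain W where z: "z = det W" and Wc: "W \<in> carrier_mat K K"
        and Wr: "\<forall>i<K. (\<lambda>j. W $$ (i,j)) \<in> relv s K \<phi>" unfolding DR_def by blast
      have Wrow: "lin s m (\<lambda>i. W $$ (r,i)) \<beta> + io (lin sA n (\<lambda>k. W $$ (r, m+k)) \<alpha>) = 0" if r: "r < K" for r
        using Wr r linK[of "\<lambda>j. W $$ (r,j)"] unfolding relv_def by simp
      have "\<forall>r. \<exists>d. r < K \<longrightarrow> (\<forall>i<m. W $$ (r,i) = (\<Sum>j<m. P i j * d j))"
      proof
        fix r show "\<exists>d. r < K \<longrightarrow> (\<forall>i<m. W $$ (r,i) = (\<Sum>j<m. P i j * d j))"
        proof (cases "r < K")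
          case True
          have "pp (lin s m (\<lambda>i. W $$ (r,i)) \<beta> + io (lin sA n (\<lambda>k. W $$ (r, m+k)) \<alpha>)) = 0"
            using Wrow[OF True] by simp
          then have "lin sY m (\<lambda>i. W $$ (r,i)) x = 0" by (simp add: pp.add ppb ppo)
          then have "\<exists>d. \<forall>i<m. W $$ (r,i) = (\<Sum>j<m. P i j * d j)"
            using P[rule_format, of "\<lambda>i. W $$ (r,i)"] by simp
          then show ?thesis by blast
        qed simp
      qed
      from choice[OF this] obtain D where D0: "\<forall>r. r < K \<longrightarrow> (\<forall>i<m. W $$ (r,i) = (\<Sum>j<m. P i j * D r j))"
        by blast
      have D: "W $$ (r,i) = (\<Sum>j<m. P i j * D r j)" if "r < K" "i < m" for r i using D0 that by blast
      define FX where "FX = (\<lambda>(r,c). if c < m then D r c else W $$ (r,c) + (if N \<le> c - m then D r (c - m - N) else 0))"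
      define X where "X = mat K K FX"
      define \<delta> where "\<delta> i j = (if i = j then 1 else 0)" for i j :: nat
      define B where "B = mat K K (FZ (\<lambda>i j. if i = j then 1 else 0))"
      have Xc: "X \<in> carrier_mat K K" and Bc: "B \<in> carrier_mat K K" unfolding X_def B_def by auto
      have detB: "det B = det Pm"
      proof -
        have 1: "mat n n (\<lambda>(i,j). if i = j then 1 else 0) = 1\<^sub>m n" by (rule eq_matI) auto
        have "det B = det Pm * det (mat n n (\<lambda>(i,j). if i = j then 1 else 0))"
          unfolding B_def by (rule detFZ)
        also have "\<dots> = det Pm" unfolding 1 by simp
        finally show ?thesis .
      qed
      have XB: "X * B = W"
      proof (rule eq_matI)
        fix r c assume "r < dim_row W" "c < dim_col W"
        then have r: "r < K" and c: "c < K" using Wc by auto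
        have "(X * B) $$ (r,c) = (\<Sum>l<K. X $$ (r,l) * B $$ (l,c))"
          by (rule mult_mat_entry[OF Xc Bc r c])
        also have "\<dots> = (\<Sum>l<m. X $$ (r,l) * B $$ (l,c)) + (\<Sum>k<n. X $$ (r,m+k) * B $$ (m+k,c))"
          unfolding K_def by (rule sum_split_add)
        also have "\<dots> = W $$ (r,c)"
        proof (cases "c < m")
          case True
          have "(\<Sum>l<m. X $$ (r,l) * B $$ (l,c)) = (\<Sum>l<m. P c l * D r l)"
            by (rule sum.cong) (use r c True in \<open>auto simp: X_def B_def FX_def FZ_def K_def mult.commute\<close>)
          moreover have "(\<Sum>k<n. X $$ (r,m+k) * B $$ (m+k,c)) = 0"
            using r c True by (auto simp: B_def FZ_def K_def intro!: sum.neutral)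
          ultimately show ?thesis using D[OF r True] by simp
        next
          case False
          have cm: "c - m < n" using False c K_def by linarith
          have "(\<Sum>l<m. X $$ (r,l) * B $$ (l,c)) = (\<Sum>l<m. D r l * (if c - m = N + l then -1 else 0))"
            by (rule sum.cong) (use r c False in \<open>auto simp: X_def B_def FX_def FZ_def K_def\<close>)
          also have "\<dots> = (if N \<le> c - m \<and> c - m - N < m then D r (c - m - N) * -1 else 0)"
            by (rule sum_if_shift)
          also have "\<dots> = (if N \<le> c - m then - D r (c - m - N) else 0)"
            using cm by (auto simp: n_def)
          finally have 1: "(\<Sum>l<m. X $$ (r,l) * B $$ (l,c)) = (if N \<le> c - m then - D r (c - m - N) else 0)" .
          have "(\<Sum>k<n. X $$ (r,m+k) * B $$ (m+k,c)) = (\<Sum>k<n. if k = c - m then FX (r, c) else 0)"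
            by (rule sum.cong) (use r c False in \<open>auto simp: X_def B_def FZ_def K_def\<close>)
          also have "\<dots> = FX (r,c)" using cm by (simp add: sum_if_eq)
          finally have 2: "(\<Sum>k<n. X $$ (r,m+k) * B $$ (m+k,c)) = FX (r,c)" .
          show ?thesis unfolding 1 2 using False by (simp add: FX_def)
        qed
        finally show "(X * B) $$ (r,c) = W $$ (r,c)" .
      qed (use Wc in \<open>auto simp: X_def B_def\<close>)
      have Xrows: "\<forall>r<m+n. (\<lambda>j. X $$ (r, m+j)) \<in> relv sA n \<alpha>"
      proof (intro allI impI)
        fix r assume r: "r < m + n"
        have rK: "r < K" using r K_def by simp
        have "lin sA n (\<lambda>j. X $$ (r, m+j)) \<alpha> =
            lin sA n (\<lambda>j. W $$ (r, m+j) + (if N \<le> j then D r (j - N) else 0)) \<alpha>"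
          by (rule lin_cong) (use rK in \<open>auto simp: X_def FX_def K_def\<close>)
        also have "\<dots> = lin sA n (\<lambda>j. W $$ (r, m+j)) \<alpha> + lin sA n (\<lambda>j. if N \<le> j then D r (j - N) else 0) \<alpha>"
          by (rule lin_add[OF mA, symmetric])
        finally have 1: "lin sA n (\<lambda>j. X $$ (r, m+j)) \<alpha> =
            lin sA n (\<lambda>j. W $$ (r, m+j)) \<alpha> + lin sA n (\<lambda>j. if N \<le> j then D r (j - N) else 0) \<alpha>" .
        have "io (lin sA n (\<lambda>j. if N \<le> j then D r (j - N) else 0) \<alpha>) =
            lin s n (\<lambda>j. if N \<le> j then D r (j - N) else 0) (\<lambda>j. io (\<alpha> j))"
          by (rule lin_hom[OF io])
        also have "\<dots> = lin s N (\<lambda>j. if N \<le> j then D r (j - N) else 0) (\<lambda>j. io (\<alpha> j))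
            + lin s m (\<lambda>j. D r j) (\<lambda>j. io (\<alpha> (N + j)))"
          unfolding n_def lin_split by (intro arg_cong2[where f="(+)"] lin_cong) auto
        also have "lin s N (\<lambda>j. if N \<le> j then D r (j - N) else 0) (\<lambda>j. io (\<alpha> j)) = lin s N (\<lambda>_. 0) (\<lambda>j. io (\<alpha> j))"
          by (rule lin_cong) auto
        also have "lin s m (\<lambda>j. D r j) (\<lambda>j. io (\<alpha> (N + j))) = lin s m (\<lambda>j. D r j) (\<lambda>j. lin s m (\<lambda>i. P i j) \<beta>)"
          by (rule lin_cong) (auto simp: io\<alpha> w_def)
        also have "\<dots> = lin s m (\<lambda>i. \<Sum>j<m. D r j * P i j) \<beta>"
          by (rule lin_lin[OF m]) simp
        also have "\<dots> = lin s m (\<lambda>i. W $$ (r,i)) \<beta>"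
          by (rule lin_cong) (auto simp: D[OF rK] mult.commute)
        finally have 2: "io (lin sA n (\<lambda>j. if N \<le> j then D r (j - N) else 0) \<alpha>) = lin s m (\<lambda>i. W $$ (r,i)) \<beta>"
          by (simp add: lin_zero_coef[OF m])
        have "io (lin sA n (\<lambda>j. X $$ (r, m+j)) \<alpha>) = 0"
          unfolding 1 io.add 2 using Wrow[OF rK] by (simp add: add.commute)
        then have "io (lin sA n (\<lambda>j. X $$ (r, m+j)) \<alpha>) = io 0" by simp
        then have "lin sA n (\<lambda>j. X $$ (r, m+j)) \<alpha> = 0" by (rule injD[OF inj])
        then show "(\<lambda>j. X $$ (r, m+j)) \<in> relv sA n \<alpha>" unfolding relv_def by simp
      qed
      have "det X \<in> ideal_gen (DR n (relv sA n \<alpha>))"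
        by (rule det_tail_rel[OF rext_relv _ Xrows]) (use Xc K_def in simp)
      moreover have "z = det X * det Pm" using z det_mult[OF Xc Bc] XB detB by simp
      moreover have "det Pm \<in> ideal_gen {det Pm}" by (rule ideal_gen_base) simp
      ultimately show "z \<in> ideal_prod (ideal_gen (DR n (relv sA n \<alpha>))) (ideal_gen {det Pm})"
        unfolding ideal_prod_def by (intro ideal_gen_base) blast
    qed
  qed
  show ?thesis unfolding inv FA sq main[unfolded K_def] ..
qed




lemma ideal_prod_zero: "ideal_prod {0} (ideal_gen X) = {0}"
proof -
  have "{a * b | a b. a \<in> {0} \<and> b \<in> ideal_gen X} = {0}"
    using ideal_gen_is_ideal[of X] unfolding is_ideal_def by auto
  then show ?thesis unfolding ideal_prod_def by (simp add: ideal_gen_zero)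
qed

lemma Fitt_is_gen: "\<exists>X. Fitt s = ideal_gen X"
  unfolding Fitt_def by blast

lemma quad_data:
  assumes "quad_pres s"
  obtains m P x where "spn s m x = UNIV"
    "\<forall>c. lin s m c x = 0 \<longleftrightarrow> (\<exists>d. \<forall>i<m. c i = (\<Sum>j<m. P i j * d j))"
proof -
  from assms obtain m :: nat and P x where 1: "\<forall>y. \<exists>c. y = (\<Sum>i<m. s (c i) (x i))"
    and 2: "\<forall>c. (\<Sum>i<m. s (c i) (x i)) = 0 \<longleftrightarrow> (\<exists>d. \<forall>i<m. c i = (\<Sum>j<m. P i j * d j))"
    unfolding quad_pres_def by blast
  have "spn s m x = UNIV" using 1 by (rule gen_spn[THEN iffD1])
  moreover have "\<forall>c. lin s m c x = 0 \<longleftrightarrow> (\<exists>d. \<forall>i<m. c i = (\<Sum>j<m. P i j * d j))"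
    using 2 unfolding lin_def .
  ultimately show ?thesis by (rule that)
qed

theorem lemma2p7:
  fixes sA :: "'r::comm_ring_1 \<Rightarrow> 'a::ab_group_add \<Rightarrow> 'a"
    and sB :: "'r \<Rightarrow> 'b::ab_group_add \<Rightarrow> 'b"
    and sC :: "'r \<Rightarrow> 'c::ab_group_add \<Rightarrow> 'c"
    and sA' :: "'r \<Rightarrow> 'a2::ab_group_add \<Rightarrow> 'a2"
    and sB' :: "'r \<Rightarrow> 'b2::ab_group_add \<Rightarrow> 'b2"
    and f :: "'a \<Rightarrow> 'b" and g :: "'b \<Rightarrow> 'c"
    and f' :: "'a2 \<Rightarrow> 'b2" and g' :: "'b2 \<Rightarrow> 'c"
  assumes "module sA" "module sB" "module sC" "module sA'" "module sB'"
    and "quad_pres sB" "quad_pres sB'"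
    and "short_exact sA sB sC f g"
    and "short_exact sA' sB' sC f' g'"
  shows "ideal_prod (Fitt sA) (Fitt sB') = ideal_prod (Fitt sA') (Fitt sB)"
proof -
  note mA = assms(1) and mB = assms(2) and mC = assms(3) and mA' = assms(4) and mB' = assms(5)
  obtain mb Pb xb where xb: "spn sB mb xb = UNIV"
    and Pb: "\<forall>c. lin sB mb c xb = 0 \<longleftrightarrow> (\<exists>d. \<forall>i<mb. c i = (\<Sum>j<mb. Pb i j * d j))"
    by (rule quad_data[OF assms(6)])
  obtain mb' Pb' xb' where xb': "spn sB' mb' xb' = UNIV"
    and Pb': "\<forall>c. lin sB' mb' c xb' = 0 \<longleftrightarrow> (\<exists>d. \<forall>i<mb'. c i = (\<Sum>j<mb'. Pb' i j * d j))"
    by (rule quad_data[OF assms(7)])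
  have hf: "module_hom sA sB f" and hg: "module_hom sB sC g" and injf: "inj f" and surjg: "surj g"
    and exf: "range f = {b. g b = 0}"
    using assms(8) unfolding short_exact_def by auto
  have hf': "module_hom sA' sB' f'" and hg': "module_hom sB' sC g'" and injf': "inj f'" and surjg': "surj g'"
    and exf': "range f' = {b. g' b = 0}"
    using assms(9) unfolding short_exact_def by auto
  interpret mB: Modules.module sB by (rule mB)
  interpret mB': Modules.module sB' by (rule mB')
  interpret hf: module_hom sA sB f by (rule hf)
  interpret hg: module_hom sB sC g by (rule hg)
  interpret hf': module_hom sA' sB' f' by (rule hf')
  interpret hg': module_hom sB' sC g' by (rule hg')
  define sP :: "'r \<Rightarrow> 'b \<times> 'b2 \<Rightarrow> 'b \<times> 'b2" where "sP r p = (sB r (fst p), sB' r (snd p))" for r p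
  have mP: "module sP"
    by unfold_locales (auto simp: sP_def prod_eq_iff mB.scale_right_distrib mB'.scale_right_distrib
        mB.scale_left_distrib mB'.scale_left_distrib)
  have hfst: "module_hom sP sB fst" by (rule mk_hom[OF mP mB]) (auto simp: sP_def)
  have hsnd: "module_hom sP sB' snd" by (rule mk_hom[OF mP mB']) (auto simp: sP_def)
  define BB where "BB = {p. g (fst p) = g' (snd p)}"
  define io1 where "io1 a = (f a, 0::'b2)" for a
  define io2 where "io2 a = (0::'b, f' a)" for a
  have hio1: "module_hom sA sP io1"
    by (rule mk_hom[OF mA mP]) (auto simp: io1_def sP_def hf.add hf.scale)
  have hio2: "module_hom sA' sP io2"
    by (rule mk_hom[OF mA' mP]) (auto simp: io2_def sP_def hf'.add hf'.scale)
  have inj1: "inj io1" using injf unfolding io1_def inj_def by auto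
  have inj2: "inj io2" using injf' unfolding io2_def inj_def by auto
  have surj1: "\<forall>y. \<exists>v\<in>BB. snd v = y"
  proof
    fix y obtain b where "g b = g' y" using surjg by (metis surjD)
    then show "\<exists>v\<in>BB. snd v = y" unfolding BB_def by (intro bexI[of _ "(b,y)"]) auto
  qed
  have surj2: "\<forall>y. \<exists>v\<in>BB. fst v = y"
  proof
    fix y obtain b where "g' b = g y" using surjg' by (metis surjD)
    then show "\<exists>v\<in>BB. fst v = y" unfolding BB_def by (intro bexI[of _ "(y,b)"]) auto
  qed
  have ker1: "range io1 = {v\<in>BB. snd v = 0}"
  proof (intro equalityI subsetI)
    fix v assume "v \<in> range io1"
    then obtain a where "v = (f a, 0)" unfolding io1_def by auto
    moreover have "g (f a) = 0" using exf by blast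
    ultimately show "v \<in> {v\<in>BB. snd v = 0}" unfolding BB_def by simp
  next
    fix v assume "v \<in> {v\<in>BB. snd v = 0}"
    then have "g (fst v) = 0" "snd v = 0" unfolding BB_def by auto
    then obtain a where "fst v = f a" using exf by blast
    then have "v = io1 a" using \<open>snd v = 0\<close> unfolding io1_def by (simp add: prod_eq_iff)
    then show "v \<in> range io1" by blast
  qed
  have ker2: "range io2 = {v\<in>BB. fst v = 0}"
  proof (intro equalityI subsetI)
    fix v assume "v \<in> range io2"
    then obtain a where "v = (0, f' a)" unfolding io2_def by auto
    moreover have "g' (f' a) = 0" using exf' by blast
    ultimately show "v \<in> {v\<in>BB. fst v = 0}" unfolding BB_def by simp
  next
    fix v assume "v \<in> {v\<in>BB. fst v = 0}"
    then have "g' (snd v) = 0" "fst v = 0" unfolding BB_def by auto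
    then obtain a where "snd v = f' a" using exf' by blast
    then have "v = io2 a" using \<open>fst v = 0\<close> unfolding io2_def by (simp add: prod_eq_iff)
    then show "v \<in> range io2" by blast
  qed
  have FB: "Fitt sB = ideal_gen {sqdet mb Pb}" by (rule Fitt_quad[OF mB xb Pb])
  have FB': "Fitt sB' = ideal_gen {sqdet mb' Pb'}" by (rule Fitt_quad[OF mB' xb' Pb'])
  have key: "ideal_prod (Fitt sA) (Fitt sB') = ideal_prod (Fitt sA') (Fitt sB)"
    if hN: "spn sP N hh = BB" for N hh
  proof -
    have "ideal_gen (DR N (relv sP N hh)) = ideal_prod (Fitt sA) (ideal_gen {sqdet mb' Pb'})"
      by (rule G_main[OF mP mA mB' hsnd hio1 inj1 hN surj1 ker1 xb' Pb'])
    moreover have "ideal_gen (DR N (relv sP N hh)) = ideal_prod (Fitt sA') (ideal_gen {sqdet mb Pb})"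
      by (rule G_main[OF mP mA' mB hfst hio2 inj2 hN surj2 ker2 xb Pb])
    ultimately show ?thesis unfolding FB FB' by simp
  qed
  have clBB: "\<forall>n c v. (\<forall>i<n. v i \<in> BB) \<longrightarrow> lin sP n c v \<in> BB"
  proof (intro allI impI)
    fix n :: nat and c v assume v: "\<forall>i<n. v i \<in> BB"
    have "g (fst (lin sP n c v)) = lin sC n c (\<lambda>i. g (fst (v i)))"
      by (simp add: lin_hom[OF hfst] lin_hom[OF hg])
    also have "\<dots> = lin sC n c (\<lambda>i. g' (snd (v i)))"
      by (rule lin_cong) (use v in \<open>auto simp: BB_def\<close>)
    also have "\<dots> = g' (snd (lin sP n c v))"
      by (simp add: lin_hom[OF hsnd] lin_hom[OF hg'])
    finally show "lin sP n c v \<in> BB" unfolding BB_def by simp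
  qed
  have cldBB: "\<forall>a b. a \<in> BB \<longrightarrow> b \<in> BB \<longrightarrow> a - b \<in> BB"
    unfolding BB_def by (auto simp: hg.diff hg'.diff)
  show ?thesis
  proof (cases "\<exists>n \<alpha>. spn sA n \<alpha> = UNIV")
    case True
    then obtain n \<alpha> where al: "spn sA n \<alpha> = UNIV" by blast
    have "\<forall>i. \<exists>b. g b = g' (xb' i)" using surjg by (metis surjD)
    then obtain bb where bb: "\<And>i. g (bb i) = g' (xb' i)" by metis
    have "spn sP (mb'+n) (\<lambda>l. if l < mb' then (bb l, xb' l) else io1 (\<alpha> (l - mb'))) = BB"
      by (rule ext_span[OF mP mA mB' hsnd hio1 clBB cldBB _ xb' ker1 al]) (auto simp: BB_def bb)
    then show ?thesis by (rule key)
  next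
    case False
    note F1 = False
    show ?thesis
    proof (cases "\<exists>n \<alpha>. spn sA' n \<alpha> = UNIV")
      case True
      then obtain n \<alpha> where al: "spn sA' n \<alpha> = UNIV" by blast
      have "\<forall>i. \<exists>b. g' b = g (xb i)" using surjg' by (metis surjD)
      then obtain bb where bb: "\<And>i. g' (bb i) = g (xb i)" by metis
      have "spn sP (mb+n) (\<lambda>l. if l < mb then (xb l, bb l) else io2 (\<alpha> (l - mb))) = BB"
        by (rule ext_span[OF mP mA' mB hfst hio2 clBB cldBB _ xb ker2 al]) (auto simp: BB_def bb)
      then show ?thesis by (rule key)
    next
      case False
      have "Fitt sA = {0}" by (rule Fitt_zero[OF F1])
      moreover have "Fitt sA' = {0}" by (rule Fitt_zero[OF False])
      ultimately show ?thesis unfolding FB FB' by (simp add: ideal_prod_zero)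
    qed
  qed
qed


end
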